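(* Let $A$ be a finite alphabet. If $\phi: A^{\mathbb{N}} \to A^{\mathbb{N}}$ $*$-commutes with the shift map $\sigma$, then $Z_k^{\phi}$ is shift invariant, i.e. $\sigma(Z_k^{\phi})=Z_k^{\phi}$, for all $k \in \mathbb{N}$.
   Context: $A$ is a finite set; $\mathbb{N}=\{1,2,3,\dots\}$; $A^{\mathbb{N}}$ is the set of one-sided infinite sequences over $A$; $\sigma(x_1x_2x_3\cdots)=x_2x_3\cdots$. Two functions $S,T: X\to X$ $*$-commute if $ST=TS$ and for every $(y,z)\in X\times X$ with $S(y)=T(z)$ there exists a unique $x\in X$ with $T(x)=y$ and $S(x)=z$. For $\phi: X\to X$ and $k\in\mathbb{N}$, $Z_k^{\phi}=\{y\in X : |\phi^{-1}(y)|=k\}$. *)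

theory Defs
  imports Main
begin

text \<open>One-sided sequences over A are modelled as functions nat \<Rightarrow> 'a
  (index 0 plays the role of index 1). The shift drops the first symbol.\<close>
definition shift :: "(nat \<Rightarrow> 'a) \<Rightarrow> (nat \<Rightarrow> 'a)" where
  "shift x = (\<lambda>n. x (Suc n))"

definition star_commute :: "('b \<Rightarrow> 'b) \<Rightarrow> ('b \<Rightarrow> 'b) \<Rightarrow> bool" where
  "star_commute S T \<longleftrightarrow> S \<circ> T = T \<circ> S \<and>
     (\<forall>y z. S y = T z \<longrightarrow> (\<exists>!x. T x = y \<and> S x = z))"

definition Z :: "nat \<Rightarrow> ('b \<Rightarrow> 'b) \<Rightarrow> 'b set" where
  "Z k \<phi> = {y. finite (\<phi> -` {y}) \<and> card (\<phi> -` {y}) = k}"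

end

theory Submission
  imports Defs
begin

lemma fib_bij:
  assumes "star_commute \<phi> shift"
  shows "bij_betw shift (\<phi> -` {y}) (\<phi> -` {shift y})"
proof -
  have comm: "\<And>x. \<phi> (shift x) = shift (\<phi> x)"
    using assms unfolding star_commute_def by (metis comp_apply)
  have uq: "\<And>a b. \<phi> a = shift b \<Longrightarrow> \<exists>!x. shift x = a \<and> \<phi> x = b"
    using assms unfolding star_commute_def by blast
  show ?thesis unfolding bij_betw_def
  proof
    show "inj_on shift (\<phi> -` {y})"
    proof (rule inj_onI)
      fix x x' assume "x \<in> \<phi> -` {y}" "x' \<in> \<phi> -` {y}" "shift x = shift x'"
      moreover have "\<phi> (shift x) = shift y" using comm \<open>x \<in> \<phi> -` {y}\<close> by simp
      ultimately show "x = x'" using uq[of "shift x" y] by auto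
    qed
    show "shift ` \<phi> -` {y} = \<phi> -` {shift y}"
    proof
      show "shift ` \<phi> -` {y} \<subseteq> \<phi> -` {shift y}" using comm by auto
      show "\<phi> -` {shift y} \<subseteq> shift ` \<phi> -` {y}"
      proof
        fix w assume "w \<in> \<phi> -` {shift y}"
        then obtain x where "shift x = w" "\<phi> x = y" using uq[of w y] by auto
        then show "w \<in> shift ` \<phi> -` {y}" by auto
      qed
    qed
  qed
qed

lemma Z_iff:
  assumes "star_commute \<phi> shift"
  shows "y \<in> Z k \<phi> \<longleftrightarrow> shift y \<in> Z k \<phi>"
proof -
  have b: "bij_betw shift (\<phi> -` {y}) (\<phi> -` {shift y})" by (rule fib_bij[OF assms])
  have "finite (\<phi> -` {y}) = finite (\<phi> -` {shift y})" using bij_betw_finite[OF b] .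
  moreover have "card (\<phi> -` {y}) = card (\<phi> -` {shift y})" using bij_betw_same_card[OF b] .
  ultimately show ?thesis unfolding Z_def by simp
qed

theorem proposition5p4:
  fixes \<phi> :: "(nat \<Rightarrow> 'a::finite) \<Rightarrow> (nat \<Rightarrow> 'a)"
  assumes "star_commute \<phi> shift"
    and "k \<ge> 1"
  shows "shift ` Z k \<phi> = Z k \<phi>"
proof
  show "shift ` Z k \<phi> \<subseteq> Z k \<phi>" using Z_iff[OF assms(1)] by auto
  show "Z k \<phi> \<subseteq> shift ` Z k \<phi>"
  proof
    fix z assume z: "z \<in> Z k \<phi>"
    define y where "y = (\<lambda>n. case n of 0 \<Rightarrow> z 0 | Suc m \<Rightarrow> z m)"
    have "shift y = z" unfolding y_def shift_def by simp
    then show "z \<in> shift ` Z k \<phi>" using z Z_iff[OF assms(1), of y k] by auto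
  qed
qed

end
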